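(* Let $(\omega,\gamma)$ be a left-invariant half-flat $\mathrm{SU}(3)$-structure on $M=S^3\times S^3$, written as $\omega\in A\otimes B$, $\gamma=a\,e^{135}+b\,e^{246}+d\beta$ with $\beta\in A\otimes B$, and let $P=\Phi(K_\omega)$, $Q=\Phi(K_\beta)$. Suppose the structure is coupled, i.e. $d\omega=\mu\gamma$ for some constant $\mu\in\mathbb R$. Then $\mu\neq0$, $a=b=0$ (so $[\gamma]=0$ in $H^3(M)$), and $P=\mu Q$.
   Context: $M=S^3\times S^3$ as a Lie group; left-invariant 1-forms $e^1,\dots,e^6$ with $de^1=e^{35},\ de^3=e^{51},\ de^5=e^{13},\ de^2=e^{46},\ de^4=e^{62},\ de^6=e^{24}$; $A=\mathrm{span}(e^1,e^3,e^5)$, $B=\mathrm{span}(e^2,e^4,e^6)$. For $\eta=\sum k_{ij}e^{2i-1}\wedge e^{2j}\in A\otimes B$, $K_\eta=(k_{ij})$. An $\mathrm{SU}(3)$-structure is a pair $(\omega,\gamma)$, $\omega$ a nondegenerate 2-form, $\gamma$ a stable 3-form with stabiliser (up to $\mathbb Z/2$) $\mathrm{SL}(3,\mathbb C)$, with $\omega\wedge\gamma=0$, $3\gamma\wedge\hat\gamma=2\omega^3$, $\omega(\cdot,J\cdot)>0$; half-flat means $d\gamma=0=d(\omega^2)$. For such structures one always has $\omega\in A\otimes B$ and $\gamma=ae^{135}+be^{246}+d\beta$ with $\beta\in A\otimes B$. $\Phi\colon\mathbb R^{3\times3}\to S^2_0(\mathbb R^4)$ is the linear map with diagonal $(-k_{11}-k_{22}-k_{33},\,-k_{11}+k_{22}+k_{33},\,k_{11}-k_{22}+k_{33},\,k_{11}+k_{22}-k_{33})$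 and off-diagonal entries $S_{12}=k_{23}-k_{32}$, $S_{13}=-k_{13}+k_{31}$, $S_{14}=k_{12}-k_{21}$, $S_{23}=-k_{12}-k_{21}$, $S_{24}=-k_{13}-k_{31}$, $S_{34}=-k_{23}-k_{32}$. *)

theory Defs
  imports Complex_Main
begin

text \<open>Left-invariant forms on S^3 x S^3 = forms on the Lie algebra dual with basis e^1..e^6.
  A form is represented by its coefficient function: alpha I is the coefficient of
  e^{i1} wedge ... wedge e^{ik} where I = {i1 < ... < ik} is a subset of {1..6}.\<close>

type_synonym form = "nat set \<Rightarrow> real"

definition zero_form :: form where "zero_form = (\<lambda>_. 0)"

text \<open>Sign of the shuffle putting e^I wedge e^J into increasing order.\<close>
definition sgn_sh :: "nat set \<Rightarrow> nat set \<Rightarrow> real" where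
  "sgn_sh I J = (-1) ^ card {(i, j). i \<in> I \<and> j \<in> J \<and> j < i}"

definition wedge :: "form \<Rightarrow> form \<Rightarrow> form" where
  "wedge \<alpha> \<beta> = (\<lambda>K. if K \<subseteq> {1..6}
      then (\<Sum>I\<in>Pow K. sgn_sh I (K - I) * \<alpha> I * \<beta> (K - I)) else 0)"

definition eb :: "nat \<Rightarrow> form" where
  "eb i = (\<lambda>I. if I = {i} then 1 else 0)"

definition is_one_form :: "form \<Rightarrow> bool" where
  "is_one_form f \<longleftrightarrow> (\<forall>I. f I \<noteq> 0 \<longrightarrow> (\<exists>i\<in>{1..6}. I = {i}))"

definition de1 :: "nat \<Rightarrow> form" where
  "de1 k = (if k = 1 then wedge (eb 3) (eb 5)
       else if k = 3 then wedge (eb 5) (eb 1)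
       else if k = 5 then wedge (eb 1) (eb 3)
       else if k = 2 then wedge (eb 4) (eb 6)
       else if k = 4 then wedge (eb 6) (eb 2)
       else if k = 6 then wedge (eb 2) (eb 4)
       else zero_form)"

definition interior :: "nat \<Rightarrow> form \<Rightarrow> form" where
  "interior k \<alpha> = (\<lambda>J. if k \<notin> J then sgn_sh {k} J * \<alpha> (insert k J) else 0)"

text \<open>Exterior derivative of left-invariant forms: the unique antiderivation of degree 1
  extending e^k |-> de^k, i.e. d = sum_k de^k wedge (interior e_k).\<close>
definition dext :: "form \<Rightarrow> form" where
  "dext \<alpha> = (\<lambda>K. \<Sum>k\<in>{1..6}. wedge (de1 k) (interior k \<alpha>) K)"

text \<open>SU(3)-structure (omega, gamma): there is a coframe f^1..f^6 in which
  omega = f^12 + f^34 + f^56 and gamma = Re((f^1+i f^2)(f^3+i f^4)(f^5+i f^6)).\<close>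
definition w3 :: "form \<Rightarrow> form \<Rightarrow> form \<Rightarrow> form" where
  "w3 x y z = wedge x (wedge y z)"

definition su3_structure :: "form \<Rightarrow> form \<Rightarrow> bool" where
  "su3_structure \<omega> \<gamma> \<longleftrightarrow> (\<exists>f :: nat \<Rightarrow> form.
      (\<forall>i\<in>{1..6}. is_one_form (f i)) \<and>
      wedge (f 1) (wedge (f 2) (wedge (f 3) (wedge (f 4) (wedge (f 5) (f 6))))) \<noteq> zero_form \<and>
      \<omega> = (\<lambda>I. wedge (f 1) (f 2) I + wedge (f 3) (f 4) I + wedge (f 5) (f 6) I) \<and>
      \<gamma> = (\<lambda>I. w3 (f 1) (f 3) (f 5) I - w3 (f 1) (f 4) (f 6) I
               - w3 (f 2) (f 3) (f 6) I - w3 (f 2) (f 4) (f 5) I))"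

definition half_flat :: "form \<Rightarrow> form \<Rightarrow> bool" where
  "half_flat \<omega> \<gamma> \<longleftrightarrow> su3_structure \<omega> \<gamma> \<and> dext \<gamma> = zero_form \<and> dext (wedge \<omega> \<omega>) = zero_form"

definition AB_form :: "(nat \<Rightarrow> nat \<Rightarrow> real) \<Rightarrow> form" where
  "AB_form K = (\<lambda>I. \<Sum>i\<in>{1..3}. \<Sum>j\<in>{1..3}. K i j * wedge (eb (2*i - 1)) (eb (2*j)) I)"

text \<open>The linear map Phi : R^{3x3} -> S^2_0(R^4), as a 4x4 matrix indexed by 1..4
  (entries outside this range are 0).\<close>
definition Phi :: "(nat \<Rightarrow> nat \<Rightarrow> real) \<Rightarrow> nat \<Rightarrow> nat \<Rightarrow> real" where
  "Phi k r s = (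
     if r = 1 \<and> s = 1 then - k 1 1 - k 2 2 - k 3 3
     else if r = 2 \<and> s = 2 then - k 1 1 + k 2 2 + k 3 3
     else if r = 3 \<and> s = 3 then k 1 1 - k 2 2 + k 3 3
     else if r = 4 \<and> s = 4 then k 1 1 + k 2 2 - k 3 3
     else if {r, s} = {1, 2} then k 2 3 - k 3 2
     else if {r, s} = {1, 3} then - k 1 3 + k 3 1
     else if {r, s} = {1, 4} then k 1 2 - k 2 1
     else if {r, s} = {2, 3} then - k 1 2 - k 2 1
     else if {r, s} = {2, 4} then - k 1 3 - k 3 1
     else if {r, s} = {3, 4} then - k 2 3 - k 3 2
     else 0)"

end

theory Submission
  imports Defs
begin


lemma prod_sign_card:
  "finite A \<Longrightarrow> (\<Prod>x\<in>A. if P x then -1 else 1::real) = (-1) ^ card {x\<in>A. P x}"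
proof -
  assume "finite A"
  have "(\<Prod>x\<in>A. if P x then -1 else 1::real) = (\<Prod>x\<in>{x\<in>A. P x}. -1)"
    using \<open>finite A\<close> by (simp add: prod.If_cases Int_def conj_commute)
  also have "\<dots> = (-1) ^ card {x\<in>A. P x}" by simp
  finally show ?thesis .
qed

lemma sgn_sh_prod:
  assumes "finite I" "finite J"
  shows "sgn_sh I J = (\<Prod>i\<in>I. \<Prod>j\<in>J. if j < i then -1 else 1)"
proof -
  have "(\<Prod>i\<in>I. \<Prod>j\<in>J. if j < i then -1 else (1::real)) =
        (\<Prod>x\<in>I \<times> J. if snd x < fst x then -1 else 1)"
    by (simp add: prod.cartesian_product case_prod_beta)
  also have "\<dots> = (-1) ^ card {x\<in>I\<times>J. snd x < fst x}"
    using assms by (simp add: prod_sign_card)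
  also have "{x\<in>I\<times>J. snd x < fst x} = {(i, j). i \<in> I \<and> j \<in> J \<and> j < i}" by auto
  finally show ?thesis by (simp add: sgn_sh_def)
qed

lemma wedge_eb_eb:
  "wedge (eb a) (eb b) = (\<lambda>K. if a \<in> {1..6} \<and> b \<in> {1..6} \<and> a \<noteq> b \<and> K = {a,b}
        then (if b < a then -1 else 1) else 0)"
proof
  fix K
  show "wedge (eb a) (eb b) K = (if a \<in> {1..6} \<and> b \<in> {1..6} \<and> a \<noteq> b \<and> K = {a,b}
        then (if b < a then -1 else 1) else 0)"
  proof (cases "K \<subseteq> {1..6}")
    case True
    have fin: "finite K" using True finite_subset by blast
    have "wedge (eb a) (eb b) K = (\<Sum>I\<in>Pow K. sgn_sh I (K - I) * eb a I * eb b (K - I))"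
      using True by (simp add: wedge_def)
    also have "\<dots> = (\<Sum>I\<in>{I\<in>Pow K. I = {a} \<and> K - I = {b}}. sgn_sh I (K - I))"
      using fin by (intro sum.mono_neutral_cong_right) (auto simp: eb_def)
    also have "{I\<in>Pow K. I = {a} \<and> K - I = {b}} = (if a \<noteq> b \<and> K = {a,b} then {{a}} else {})"
      by auto
    finally have eq: "wedge (eb a) (eb b) K = (\<Sum>I\<in>(if a \<noteq> b \<and> K = {a,b} then {{a}} else {}). sgn_sh I (K - I))" .
    show ?thesis
    proof (cases "a \<noteq> b \<and> K = {a,b}")
      case c: True
      then have "{a,b} - {a} = {b}" by auto
      then have "wedge (eb a) (eb b) K = sgn_sh {a} {b}" using eq c by simp
      also have "\<dots> = (if b < a then -1 else 1)" by (simp add: sgn_sh_prod)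
      finally show ?thesis using c True by auto
    next
      case False
      then show ?thesis using eq by auto
    qed
  next
    case False
    then show ?thesis by (auto simp: wedge_def)
  qed
qed

lemma wedge_single:
  assumes "\<And>I. I \<noteq> S \<Longrightarrow> \<alpha> I = 0"
  shows "wedge \<alpha> \<beta> K = (if K \<subseteq> {1..6} \<and> S \<subseteq> K then sgn_sh S (K - S) * \<alpha> S * \<beta> (K - S) else 0)"
proof (cases "K \<subseteq> {1..6}")
  case True
  have fin: "finite K" using True finite_subset by blast
  have "wedge \<alpha> \<beta> K = (\<Sum>I\<in>Pow K. sgn_sh I (K - I) * \<alpha> I * \<beta> (K - I))"
    using True by (simp add: wedge_def)
  also have "\<dots> = (\<Sum>I\<in>{I\<in>Pow K. I = S}. sgn_sh I (K - I) * \<alpha> I * \<beta> (K - I))"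
    using fin assms by (intro sum.mono_neutral_cong_right) auto
  also have "{I\<in>Pow K. I = S} = (if S \<subseteq> K then {S} else {})" by auto
  finally show ?thesis using True by auto
next
  case False
  then show ?thesis by (auto simp: wedge_def)
qed

lemma six: "{1..6::nat} = {1,2,3,4,5,6}" by auto
lemma three: "{1..3::nat} = {1,2,3}" by auto


definition dS :: "nat \<Rightarrow> nat set" where
  "dS k = (if k = 1 then {3,5} else if k = 3 then {1,5} else if k = 5 then {1,3}
     else if k = 2 then {4,6} else if k = 4 then {2,6} else {2,4})"
definition dc :: "nat \<Rightarrow> real" where
  "dc k = (if k = 3 \<or> k = 4 then -1 else 1)"

lemma de1_eq: "k \<in> {1..6} \<Longrightarrow> de1 k = (\<lambda>I. if I = dS k then dc k else 0)"
  unfolding six by (auto simp: de1_def wedge_eb_eb dS_def dc_def fun_eq_iff)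

lemma dext_eval: "dext \<alpha> K = (\<Sum>k\<in>{1..6}. if K \<subseteq> {1..6} \<and> dS k \<subseteq> K
   then sgn_sh (dS k) (K - dS k) * dc k * interior k \<alpha> (K - dS k) else 0)"
  unfolding dext_def
  by (intro sum.cong refl, subst de1_eq, simp, subst wedge_single[where S="dS k" for k], auto)

lemma AB_eval: "AB_form K I = (\<Sum>i\<in>{1,2,3}. \<Sum>j\<in>{1,2,3}. K i j *
   (if I = {2*i-1, 2*j} then (if 2*j < 2*i-1 then -1 else 1) else 0))"
  unfolding AB_form_def three
  by (intro sum.cong refl) (auto simp: wedge_eb_eb)



lemma wedge_eb: "wedge (eb a) \<beta> K = (if K \<subseteq> {1..6} \<and> a \<in> K then sgn_sh {a} (K-{a}) * \<beta> (K-{a}) else 0)"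
  by (subst wedge_single[where S="{a}"]) (auto simp: eb_def)

lemma dext_eval6: "dext \<alpha> K = (\<Sum>k\<in>{1,2,3,4,5,6}. if K \<subseteq> {1..6} \<and> dS k \<subseteq> K
   then sgn_sh (dS k) (K - dS k) * dc k * interior k \<alpha> (K - dS k) else 0)"
  using dext_eval[of \<alpha> K] unfolding six .


lemma wedge_one:
  assumes "is_one_form f"
  shows "wedge f \<beta> K = (if K \<subseteq> {1..6} then (\<Sum>p\<in>K. sgn_sh {p} (K-{p}) * f {p} * \<beta> (K-{p})) else 0)"
proof (cases "K \<subseteq> {1..6}")
  case True
  have fin: "finite K" using True finite_subset by blast
  have "wedge f \<beta> K = (\<Sum>I\<in>Pow K. sgn_sh I (K - I) * f I * \<beta> (K - I))"
    using True by (simp add: wedge_def)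
  also have "\<dots> = (\<Sum>I\<in>(\<lambda>p. {p}) ` K. sgn_sh I (K - I) * f I * \<beta> (K - I))"
  proof (intro sum.mono_neutral_cong_right)
    show "\<forall>i\<in>Pow K - (\<lambda>p. {p}) ` K. sgn_sh i (K - i) * f i * \<beta> (K - i) = 0"
    proof
      fix i assume i: "i \<in> Pow K - (\<lambda>p. {p}) ` K"
      have "f i = 0"
      proof (rule ccontr)
        assume "f i \<noteq> 0"
        then obtain j where "i = {j}" using assms unfolding is_one_form_def by blast
        then show False using i by auto
      qed
      then show "sgn_sh i (K - i) * f i * \<beta> (K - i) = 0" by simp
    qed
  qed (use fin in auto)
  also have "\<dots> = (\<Sum>p\<in>K. sgn_sh {p} (K-{p}) * f {p} * \<beta> (K-{p}))"
    by (subst sum.reindex) (auto simp: inj_on_def)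
  finally show ?thesis using True by simp
next
  case False
  then show ?thesis by (auto simp: wedge_def)
qed



lemma wedge_eb_eb': "wedge (eb a) (eb b) K = (if 1 \<le> a \<and> a \<le> 6 \<and> 1 \<le> b \<and> b \<le> 6 \<and> a \<noteq> b \<and> K \<subseteq> {a,b} \<and> a \<in> K \<and> b \<in> K
        then (if b < a then -1 else 1) else 0)"
proof -
  have "(K = {a,b}) = (K \<subseteq> {a,b} \<and> a \<in> K \<and> b \<in> K)" by auto
  then show ?thesis by (simp add: wedge_eb_eb)
qed
lemma AB_eval': "AB_form K I = K 1 1 * (if I \<subseteq> {1,2} \<and> 1 \<in> I \<and> 2 \<in> I then 1 else 0) + K 1 2 * (if I \<subseteq> {1,4} \<and> 1 \<in> I \<and> 4 \<in> I then 1 else 0) + K 1 3 * (if I \<subseteq> {1,6} \<and> 1 \<in> I \<and> 6 \<in> I then 1 else 0) + K 2 1 * (if I \<subseteq> {3,2} \<and> 3 \<in> I \<and> 2 \<in> I then (-1) else 0) + K 2 2 * (if I \<subseteq> {3,4} \<and> 3 \<in> I \<and> 4 \<in> I then 1 else 0) + K 2 3 * (if I \<subseteq> {3,6} \<and> 3 \<in> I \<and> 6 \<in> I then 1 else 0) + K 3 1 * (if I \<subseteq> {5,2} \<and> 5 \<in> I \<and> 2 \<in> I then (-1) else 0) + K 3 2 * (if I \<subseteq> {5,4} \<and> 5 \<in> I \<and> 4 \<in> I then (-1) else 0) + K 3 3 * (if I \<subseteq> {5,6} \<and> 5 \<in> I \<and> 6 \<in> I then 1 else 0)"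
  unfolding AB_form_def three by (simp add: wedge_eb_eb' split del: if_split cong: if_cong)
lemma eb_apply: "eb i I = (if I \<subseteq> {i} \<and> i \<in> I then 1 else 0)" by (auto simp add: eb_def)
lemmas evs = dext_eval6 dS_def dc_def sgn_sh_prod interior_def AB_eval' w3_def wedge_eb eb_apply wedge_eb_eb'
lemma t1: "dext (AB_form Kw) {3,5,2} = Kw 1 1" by (simp add: evs)
lemma t2: "dext (AB_form Kw) {1,5,4} = Kw 2 2" by (simp add: evs)
lemma t3: "dext (AB_form Kw) {1,3,6} = Kw 3 3" by (simp add: evs)
lemma t4: "dext (AB_form Kw) {1,3,5} = 0" by (simp add: evs)
lemma t5: "w3 (eb 1) (eb 3) (eb 5) {1,3,5} = 1" by (simp add: evs)
lemma t6: "w3 (eb 2) (eb 4) (eb 6) {1,3,5} = 0" by (simp add: evs)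
lemma t7: "w3 (eb 2) (eb 4) (eb 6) {3,5,2} = 0" by (simp add: evs)
lemma t8: "w3 (eb 1) (eb 3) (eb 5) {3,5,2} = 0" by (simp add: evs)

lemma pv_12: assumes "is_one_form h"
  shows "wedge h g {1,2} = h {1} * g {2} - h {2} * g {1}"
  by (subst wedge_one[OF assms]) (simp add: sgn_sh_prod insert_Diff_if)

lemma pv_13: assumes "is_one_form h"
  shows "wedge h g {1,3} = h {1} * g {3} - h {3} * g {1}"
  by (subst wedge_one[OF assms]) (simp add: sgn_sh_prod insert_Diff_if)

lemma pv_14: assumes "is_one_form h"
  shows "wedge h g {1,4} = h {1} * g {4} - h {4} * g {1}"
  by (subst wedge_one[OF assms]) (simp add: sgn_sh_prod insert_Diff_if)

lemma pv_15: assumes "is_one_form h"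
  shows "wedge h g {1,5} = h {1} * g {5} - h {5} * g {1}"
  by (subst wedge_one[OF assms]) (simp add: sgn_sh_prod insert_Diff_if)

lemma pv_16: assumes "is_one_form h"
  shows "wedge h g {1,6} = h {1} * g {6} - h {6} * g {1}"
  by (subst wedge_one[OF assms]) (simp add: sgn_sh_prod insert_Diff_if)

lemma pv_23: assumes "is_one_form h"
  shows "wedge h g {2,3} = h {2} * g {3} - h {3} * g {2}"
  by (subst wedge_one[OF assms]) (simp add: sgn_sh_prod insert_Diff_if)

lemma pv_24: assumes "is_one_form h"
  shows "wedge h g {2,4} = h {2} * g {4} - h {4} * g {2}"
  by (subst wedge_one[OF assms]) (simp add: sgn_sh_prod insert_Diff_if)

lemma pv_25: assumes "is_one_form h"
  shows "wedge h g {2,5} = h {2} * g {5} - h {5} * g {2}"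
  by (subst wedge_one[OF assms]) (simp add: sgn_sh_prod insert_Diff_if)

lemma pv_26: assumes "is_one_form h"
  shows "wedge h g {2,6} = h {2} * g {6} - h {6} * g {2}"
  by (subst wedge_one[OF assms]) (simp add: sgn_sh_prod insert_Diff_if)

lemma pv_34: assumes "is_one_form h"
  shows "wedge h g {3,4} = h {3} * g {4} - h {4} * g {3}"
  by (subst wedge_one[OF assms]) (simp add: sgn_sh_prod insert_Diff_if)

lemma pv_35: assumes "is_one_form h"
  shows "wedge h g {3,5} = h {3} * g {5} - h {5} * g {3}"
  by (subst wedge_one[OF assms]) (simp add: sgn_sh_prod insert_Diff_if)

lemma pv_36: assumes "is_one_form h"
  shows "wedge h g {3,6} = h {3} * g {6} - h {6} * g {3}"
  by (subst wedge_one[OF assms]) (simp add: sgn_sh_prod insert_Diff_if)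

lemma pv_45: assumes "is_one_form h"
  shows "wedge h g {4,5} = h {4} * g {5} - h {5} * g {4}"
  by (subst wedge_one[OF assms]) (simp add: sgn_sh_prod insert_Diff_if)

lemma pv_46: assumes "is_one_form h"
  shows "wedge h g {4,6} = h {4} * g {6} - h {6} * g {4}"
  by (subst wedge_one[OF assms]) (simp add: sgn_sh_prod insert_Diff_if)

lemma pv_56: assumes "is_one_form h"
  shows "wedge h g {5,6} = h {5} * g {6} - h {6} * g {5}"
  by (subst wedge_one[OF assms]) (simp add: sgn_sh_prod insert_Diff_if)

lemma lv_123: fixes f :: "nat \<Rightarrow> form" assumes "is_one_form (f 4)"
  shows "(wedge (f 4) (wedge (f 5) (f 6))) {1,2,3} = f 4 {1} * (wedge (f 5) (f 6)) {2,3} - f 4 {2} * (wedge (f 5) (f 6)) {1,3} + f 4 {3} * (wedge (f 5) (f 6)) {1,2}"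
  by (subst wedge_one[OF assms]) (simp add: sgn_sh_prod insert_Diff_if)

lemma lv_124: fixes f :: "nat \<Rightarrow> form" assumes "is_one_form (f 4)"
  shows "(wedge (f 4) (wedge (f 5) (f 6))) {1,2,4} = f 4 {1} * (wedge (f 5) (f 6)) {2,4} - f 4 {2} * (wedge (f 5) (f 6)) {1,4} + f 4 {4} * (wedge (f 5) (f 6)) {1,2}"
  by (subst wedge_one[OF assms]) (simp add: sgn_sh_prod insert_Diff_if)

lemma lv_125: fixes f :: "nat \<Rightarrow> form" assumes "is_one_form (f 4)"
  shows "(wedge (f 4) (wedge (f 5) (f 6))) {1,2,5} = f 4 {1} * (wedge (f 5) (f 6)) {2,5} - f 4 {2} * (wedge (f 5) (f 6)) {1,5} + f 4 {5} * (wedge (f 5) (f 6)) {1,2}"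
  by (subst wedge_one[OF assms]) (simp add: sgn_sh_prod insert_Diff_if)

lemma lv_126: fixes f :: "nat \<Rightarrow> form" assumes "is_one_form (f 4)"
  shows "(wedge (f 4) (wedge (f 5) (f 6))) {1,2,6} = f 4 {1} * (wedge (f 5) (f 6)) {2,6} - f 4 {2} * (wedge (f 5) (f 6)) {1,6} + f 4 {6} * (wedge (f 5) (f 6)) {1,2}"
  by (subst wedge_one[OF assms]) (simp add: sgn_sh_prod insert_Diff_if)

lemma lv_134: fixes f :: "nat \<Rightarrow> form" assumes "is_one_form (f 4)"
  shows "(wedge (f 4) (wedge (f 5) (f 6))) {1,3,4} = f 4 {1} * (wedge (f 5) (f 6)) {3,4} - f 4 {3} * (wedge (f 5) (f 6)) {1,4} + f 4 {4} * (wedge (f 5) (f 6)) {1,3}"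
  by (subst wedge_one[OF assms]) (simp add: sgn_sh_prod insert_Diff_if)

lemma lv_135: fixes f :: "nat \<Rightarrow> form" assumes "is_one_form (f 4)"
  shows "(wedge (f 4) (wedge (f 5) (f 6))) {1,3,5} = f 4 {1} * (wedge (f 5) (f 6)) {3,5} - f 4 {3} * (wedge (f 5) (f 6)) {1,5} + f 4 {5} * (wedge (f 5) (f 6)) {1,3}"
  by (subst wedge_one[OF assms]) (simp add: sgn_sh_prod insert_Diff_if)

lemma lv_136: fixes f :: "nat \<Rightarrow> form" assumes "is_one_form (f 4)"
  shows "(wedge (f 4) (wedge (f 5) (f 6))) {1,3,6} = f 4 {1} * (wedge (f 5) (f 6)) {3,6} - f 4 {3} * (wedge (f 5) (f 6)) {1,6} + f 4 {6} * (wedge (f 5) (f 6)) {1,3}"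
  by (subst wedge_one[OF assms]) (simp add: sgn_sh_prod insert_Diff_if)

lemma lv_145: fixes f :: "nat \<Rightarrow> form" assumes "is_one_form (f 4)"
  shows "(wedge (f 4) (wedge (f 5) (f 6))) {1,4,5} = f 4 {1} * (wedge (f 5) (f 6)) {4,5} - f 4 {4} * (wedge (f 5) (f 6)) {1,5} + f 4 {5} * (wedge (f 5) (f 6)) {1,4}"
  by (subst wedge_one[OF assms]) (simp add: sgn_sh_prod insert_Diff_if)

lemma lv_146: fixes f :: "nat \<Rightarrow> form" assumes "is_one_form (f 4)"
  shows "(wedge (f 4) (wedge (f 5) (f 6))) {1,4,6} = f 4 {1} * (wedge (f 5) (f 6)) {4,6} - f 4 {4} * (wedge (f 5) (f 6)) {1,6} + f 4 {6} * (wedge (f 5) (f 6)) {1,4}"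
  by (subst wedge_one[OF assms]) (simp add: sgn_sh_prod insert_Diff_if)

lemma lv_156: fixes f :: "nat \<Rightarrow> form" assumes "is_one_form (f 4)"
  shows "(wedge (f 4) (wedge (f 5) (f 6))) {1,5,6} = f 4 {1} * (wedge (f 5) (f 6)) {5,6} - f 4 {5} * (wedge (f 5) (f 6)) {1,6} + f 4 {6} * (wedge (f 5) (f 6)) {1,5}"
  by (subst wedge_one[OF assms]) (simp add: sgn_sh_prod insert_Diff_if)

lemma lv_234: fixes f :: "nat \<Rightarrow> form" assumes "is_one_form (f 4)"
  shows "(wedge (f 4) (wedge (f 5) (f 6))) {2,3,4} = f 4 {2} * (wedge (f 5) (f 6)) {3,4} - f 4 {3} * (wedge (f 5) (f 6)) {2,4} + f 4 {4} * (wedge (f 5) (f 6)) {2,3}"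
  by (subst wedge_one[OF assms]) (simp add: sgn_sh_prod insert_Diff_if)

lemma lv_235: fixes f :: "nat \<Rightarrow> form" assumes "is_one_form (f 4)"
  shows "(wedge (f 4) (wedge (f 5) (f 6))) {2,3,5} = f 4 {2} * (wedge (f 5) (f 6)) {3,5} - f 4 {3} * (wedge (f 5) (f 6)) {2,5} + f 4 {5} * (wedge (f 5) (f 6)) {2,3}"
  by (subst wedge_one[OF assms]) (simp add: sgn_sh_prod insert_Diff_if)

lemma lv_236: fixes f :: "nat \<Rightarrow> form" assumes "is_one_form (f 4)"
  shows "(wedge (f 4) (wedge (f 5) (f 6))) {2,3,6} = f 4 {2} * (wedge (f 5) (f 6)) {3,6} - f 4 {3} * (wedge (f 5) (f 6)) {2,6} + f 4 {6} * (wedge (f 5) (f 6)) {2,3}"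
  by (subst wedge_one[OF assms]) (simp add: sgn_sh_prod insert_Diff_if)

lemma lv_245: fixes f :: "nat \<Rightarrow> form" assumes "is_one_form (f 4)"
  shows "(wedge (f 4) (wedge (f 5) (f 6))) {2,4,5} = f 4 {2} * (wedge (f 5) (f 6)) {4,5} - f 4 {4} * (wedge (f 5) (f 6)) {2,5} + f 4 {5} * (wedge (f 5) (f 6)) {2,4}"
  by (subst wedge_one[OF assms]) (simp add: sgn_sh_prod insert_Diff_if)

lemma lv_246: fixes f :: "nat \<Rightarrow> form" assumes "is_one_form (f 4)"
  shows "(wedge (f 4) (wedge (f 5) (f 6))) {2,4,6} = f 4 {2} * (wedge (f 5) (f 6)) {4,6} - f 4 {4} * (wedge (f 5) (f 6)) {2,6} + f 4 {6} * (wedge (f 5) (f 6)) {2,4}"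
  by (subst wedge_one[OF assms]) (simp add: sgn_sh_prod insert_Diff_if)

lemma lv_256: fixes f :: "nat \<Rightarrow> form" assumes "is_one_form (f 4)"
  shows "(wedge (f 4) (wedge (f 5) (f 6))) {2,5,6} = f 4 {2} * (wedge (f 5) (f 6)) {5,6} - f 4 {5} * (wedge (f 5) (f 6)) {2,6} + f 4 {6} * (wedge (f 5) (f 6)) {2,5}"
  by (subst wedge_one[OF assms]) (simp add: sgn_sh_prod insert_Diff_if)

lemma lv_345: fixes f :: "nat \<Rightarrow> form" assumes "is_one_form (f 4)"
  shows "(wedge (f 4) (wedge (f 5) (f 6))) {3,4,5} = f 4 {3} * (wedge (f 5) (f 6)) {4,5} - f 4 {4} * (wedge (f 5) (f 6)) {3,5} + f 4 {5} * (wedge (f 5) (f 6)) {3,4}"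
  by (subst wedge_one[OF assms]) (simp add: sgn_sh_prod insert_Diff_if)

lemma lv_346: fixes f :: "nat \<Rightarrow> form" assumes "is_one_form (f 4)"
  shows "(wedge (f 4) (wedge (f 5) (f 6))) {3,4,6} = f 4 {3} * (wedge (f 5) (f 6)) {4,6} - f 4 {4} * (wedge (f 5) (f 6)) {3,6} + f 4 {6} * (wedge (f 5) (f 6)) {3,4}"
  by (subst wedge_one[OF assms]) (simp add: sgn_sh_prod insert_Diff_if)

lemma lv_356: fixes f :: "nat \<Rightarrow> form" assumes "is_one_form (f 4)"
  shows "(wedge (f 4) (wedge (f 5) (f 6))) {3,5,6} = f 4 {3} * (wedge (f 5) (f 6)) {5,6} - f 4 {5} * (wedge (f 5) (f 6)) {3,6} + f 4 {6} * (wedge (f 5) (f 6)) {3,5}"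
  by (subst wedge_one[OF assms]) (simp add: sgn_sh_prod insert_Diff_if)

lemma lv_456: fixes f :: "nat \<Rightarrow> form" assumes "is_one_form (f 4)"
  shows "(wedge (f 4) (wedge (f 5) (f 6))) {4,5,6} = f 4 {4} * (wedge (f 5) (f 6)) {5,6} - f 4 {5} * (wedge (f 5) (f 6)) {4,6} + f 4 {6} * (wedge (f 5) (f 6)) {4,5}"
  by (subst wedge_one[OF assms]) (simp add: sgn_sh_prod insert_Diff_if)

lemma lv_1234: fixes f :: "nat \<Rightarrow> form" assumes "is_one_form (f 3)"
  shows "(wedge (f 3) (wedge (f 4) (wedge (f 5) (f 6)))) {1,2,3,4} = f 3 {1} * (wedge (f 4) (wedge (f 5) (f 6))) {2,3,4} - f 3 {2} * (wedge (f 4) (wedge (f 5) (f 6))) {1,3,4} + f 3 {3} * (wedge (f 4) (wedge (f 5) (f 6))) {1,2,4} - f 3 {4} * (wedge (f 4) (wedge (f 5) (f 6))) {1,2,3}"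
  by (subst wedge_one[OF assms]) (simp add: sgn_sh_prod insert_Diff_if)

lemma lv_1235: fixes f :: "nat \<Rightarrow> form" assumes "is_one_form (f 3)"
  shows "(wedge (f 3) (wedge (f 4) (wedge (f 5) (f 6)))) {1,2,3,5} = f 3 {1} * (wedge (f 4) (wedge (f 5) (f 6))) {2,3,5} - f 3 {2} * (wedge (f 4) (wedge (f 5) (f 6))) {1,3,5} + f 3 {3} * (wedge (f 4) (wedge (f 5) (f 6))) {1,2,5} - f 3 {5} * (wedge (f 4) (wedge (f 5) (f 6))) {1,2,3}"
  by (subst wedge_one[OF assms]) (simp add: sgn_sh_prod insert_Diff_if)

lemma lv_1236: fixes f :: "nat \<Rightarrow> form" assumes "is_one_form (f 3)"
  shows "(wedge (f 3) (wedge (f 4) (wedge (f 5) (f 6)))) {1,2,3,6} = f 3 {1} * (wedge (f 4) (wedge (f 5) (f 6))) {2,3,6} - f 3 {2} * (wedge (f 4) (wedge (f 5) (f 6))) {1,3,6} + f 3 {3} * (wedge (f 4) (wedge (f 5) (f 6))) {1,2,6} - f 3 {6} * (wedge (f 4) (wedge (f 5) (f 6))) {1,2,3}"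
  by (subst wedge_one[OF assms]) (simp add: sgn_sh_prod insert_Diff_if)

lemma lv_1245: fixes f :: "nat \<Rightarrow> form" assumes "is_one_form (f 3)"
  shows "(wedge (f 3) (wedge (f 4) (wedge (f 5) (f 6)))) {1,2,4,5} = f 3 {1} * (wedge (f 4) (wedge (f 5) (f 6))) {2,4,5} - f 3 {2} * (wedge (f 4) (wedge (f 5) (f 6))) {1,4,5} + f 3 {4} * (wedge (f 4) (wedge (f 5) (f 6))) {1,2,5} - f 3 {5} * (wedge (f 4) (wedge (f 5) (f 6))) {1,2,4}"
  by (subst wedge_one[OF assms]) (simp add: sgn_sh_prod insert_Diff_if)

lemma lv_1246: fixes f :: "nat \<Rightarrow> form" assumes "is_one_form (f 3)"
  shows "(wedge (f 3) (wedge (f 4) (wedge (f 5) (f 6)))) {1,2,4,6} = f 3 {1} * (wedge (f 4) (wedge (f 5) (f 6))) {2,4,6} - f 3 {2} * (wedge (f 4) (wedge (f 5) (f 6))) {1,4,6} + f 3 {4} * (wedge (f 4) (wedge (f 5) (f 6))) {1,2,6} - f 3 {6} * (wedge (f 4) (wedge (f 5) (f 6))) {1,2,4}"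
  by (subst wedge_one[OF assms]) (simp add: sgn_sh_prod insert_Diff_if)

lemma lv_1256: fixes f :: "nat \<Rightarrow> form" assumes "is_one_form (f 3)"
  shows "(wedge (f 3) (wedge (f 4) (wedge (f 5) (f 6)))) {1,2,5,6} = f 3 {1} * (wedge (f 4) (wedge (f 5) (f 6))) {2,5,6} - f 3 {2} * (wedge (f 4) (wedge (f 5) (f 6))) {1,5,6} + f 3 {5} * (wedge (f 4) (wedge (f 5) (f 6))) {1,2,6} - f 3 {6} * (wedge (f 4) (wedge (f 5) (f 6))) {1,2,5}"
  by (subst wedge_one[OF assms]) (simp add: sgn_sh_prod insert_Diff_if)

lemma lv_1345: fixes f :: "nat \<Rightarrow> form" assumes "is_one_form (f 3)"
  shows "(wedge (f 3) (wedge (f 4) (wedge (f 5) (f 6)))) {1,3,4,5} = f 3 {1} * (wedge (f 4) (wedge (f 5) (f 6))) {3,4,5} - f 3 {3} * (wedge (f 4) (wedge (f 5) (f 6))) {1,4,5} + f 3 {4} * (wedge (f 4) (wedge (f 5) (f 6))) {1,3,5} - f 3 {5} * (wedge (f 4) (wedge (f 5) (f 6))) {1,3,4}"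
  by (subst wedge_one[OF assms]) (simp add: sgn_sh_prod insert_Diff_if)

lemma lv_1346: fixes f :: "nat \<Rightarrow> form" assumes "is_one_form (f 3)"
  shows "(wedge (f 3) (wedge (f 4) (wedge (f 5) (f 6)))) {1,3,4,6} = f 3 {1} * (wedge (f 4) (wedge (f 5) (f 6))) {3,4,6} - f 3 {3} * (wedge (f 4) (wedge (f 5) (f 6))) {1,4,6} + f 3 {4} * (wedge (f 4) (wedge (f 5) (f 6))) {1,3,6} - f 3 {6} * (wedge (f 4) (wedge (f 5) (f 6))) {1,3,4}"
  by (subst wedge_one[OF assms]) (simp add: sgn_sh_prod insert_Diff_if)

lemma lv_1356: fixes f :: "nat \<Rightarrow> form" assumes "is_one_form (f 3)"
  shows "(wedge (f 3) (wedge (f 4) (wedge (f 5) (f 6)))) {1,3,5,6} = f 3 {1} * (wedge (f 4) (wedge (f 5) (f 6))) {3,5,6} - f 3 {3} * (wedge (f 4) (wedge (f 5) (f 6))) {1,5,6} + f 3 {5} * (wedge (f 4) (wedge (f 5) (f 6))) {1,3,6} - f 3 {6} * (wedge (f 4) (wedge (f 5) (f 6))) {1,3,5}"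
  by (subst wedge_one[OF assms]) (simp add: sgn_sh_prod insert_Diff_if)

lemma lv_1456: fixes f :: "nat \<Rightarrow> form" assumes "is_one_form (f 3)"
  shows "(wedge (f 3) (wedge (f 4) (wedge (f 5) (f 6)))) {1,4,5,6} = f 3 {1} * (wedge (f 4) (wedge (f 5) (f 6))) {4,5,6} - f 3 {4} * (wedge (f 4) (wedge (f 5) (f 6))) {1,5,6} + f 3 {5} * (wedge (f 4) (wedge (f 5) (f 6))) {1,4,6} - f 3 {6} * (wedge (f 4) (wedge (f 5) (f 6))) {1,4,5}"
  by (subst wedge_one[OF assms]) (simp add: sgn_sh_prod insert_Diff_if)

lemma lv_2345: fixes f :: "nat \<Rightarrow> form" assumes "is_one_form (f 3)"
  shows "(wedge (f 3) (wedge (f 4) (wedge (f 5) (f 6)))) {2,3,4,5} = f 3 {2} * (wedge (f 4) (wedge (f 5) (f 6))) {3,4,5} - f 3 {3} * (wedge (f 4) (wedge (f 5) (f 6))) {2,4,5} + f 3 {4} * (wedge (f 4) (wedge (f 5) (f 6))) {2,3,5} - f 3 {5} * (wedge (f 4) (wedge (f 5) (f 6))) {2,3,4}"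
  by (subst wedge_one[OF assms]) (simp add: sgn_sh_prod insert_Diff_if)

lemma lv_2346: fixes f :: "nat \<Rightarrow> form" assumes "is_one_form (f 3)"
  shows "(wedge (f 3) (wedge (f 4) (wedge (f 5) (f 6)))) {2,3,4,6} = f 3 {2} * (wedge (f 4) (wedge (f 5) (f 6))) {3,4,6} - f 3 {3} * (wedge (f 4) (wedge (f 5) (f 6))) {2,4,6} + f 3 {4} * (wedge (f 4) (wedge (f 5) (f 6))) {2,3,6} - f 3 {6} * (wedge (f 4) (wedge (f 5) (f 6))) {2,3,4}"
  by (subst wedge_one[OF assms]) (simp add: sgn_sh_prod insert_Diff_if)

lemma lv_2356: fixes f :: "nat \<Rightarrow> form" assumes "is_one_form (f 3)"
  shows "(wedge (f 3) (wedge (f 4) (wedge (f 5) (f 6)))) {2,3,5,6} = f 3 {2} * (wedge (f 4) (wedge (f 5) (f 6))) {3,5,6} - f 3 {3} * (wedge (f 4) (wedge (f 5) (f 6))) {2,5,6} + f 3 {5} * (wedge (f 4) (wedge (f 5) (f 6))) {2,3,6} - f 3 {6} * (wedge (f 4) (wedge (f 5) (f 6))) {2,3,5}"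
  by (subst wedge_one[OF assms]) (simp add: sgn_sh_prod insert_Diff_if)

lemma lv_2456: fixes f :: "nat \<Rightarrow> form" assumes "is_one_form (f 3)"
  shows "(wedge (f 3) (wedge (f 4) (wedge (f 5) (f 6)))) {2,4,5,6} = f 3 {2} * (wedge (f 4) (wedge (f 5) (f 6))) {4,5,6} - f 3 {4} * (wedge (f 4) (wedge (f 5) (f 6))) {2,5,6} + f 3 {5} * (wedge (f 4) (wedge (f 5) (f 6))) {2,4,6} - f 3 {6} * (wedge (f 4) (wedge (f 5) (f 6))) {2,4,5}"
  by (subst wedge_one[OF assms]) (simp add: sgn_sh_prod insert_Diff_if)

lemma lv_3456: fixes f :: "nat \<Rightarrow> form" assumes "is_one_form (f 3)"
  shows "(wedge (f 3) (wedge (f 4) (wedge (f 5) (f 6)))) {3,4,5,6} = f 3 {3} * (wedge (f 4) (wedge (f 5) (f 6))) {4,5,6} - f 3 {4} * (wedge (f 4) (wedge (f 5) (f 6))) {3,5,6} + f 3 {5} * (wedge (f 4) (wedge (f 5) (f 6))) {3,4,6} - f 3 {6} * (wedge (f 4) (wedge (f 5) (f 6))) {3,4,5}"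
  by (subst wedge_one[OF assms]) (simp add: sgn_sh_prod insert_Diff_if)

lemma lv_12345: fixes f :: "nat \<Rightarrow> form" assumes "is_one_form (f 2)"
  shows "(wedge (f 2) (wedge (f 3) (wedge (f 4) (wedge (f 5) (f 6))))) {1,2,3,4,5} = f 2 {1} * (wedge (f 3) (wedge (f 4) (wedge (f 5) (f 6)))) {2,3,4,5} - f 2 {2} * (wedge (f 3) (wedge (f 4) (wedge (f 5) (f 6)))) {1,3,4,5} + f 2 {3} * (wedge (f 3) (wedge (f 4) (wedge (f 5) (f 6)))) {1,2,4,5} - f 2 {4} * (wedge (f 3) (wedge (f 4) (wedge (f 5) (f 6)))) {1,2,3,5} + f 2 {5} * (wedge (f 3) (wedge (f 4) (wedge (f 5) (f 6)))) {1,2,3,4}"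
  by (subst wedge_one[OF assms]) (simp add: sgn_sh_prod insert_Diff_if)

lemma lv_12346: fixes f :: "nat \<Rightarrow> form" assumes "is_one_form (f 2)"
  shows "(wedge (f 2) (wedge (f 3) (wedge (f 4) (wedge (f 5) (f 6))))) {1,2,3,4,6} = f 2 {1} * (wedge (f 3) (wedge (f 4) (wedge (f 5) (f 6)))) {2,3,4,6} - f 2 {2} * (wedge (f 3) (wedge (f 4) (wedge (f 5) (f 6)))) {1,3,4,6} + f 2 {3} * (wedge (f 3) (wedge (f 4) (wedge (f 5) (f 6)))) {1,2,4,6} - f 2 {4} * (wedge (f 3) (wedge (f 4) (wedge (f 5) (f 6)))) {1,2,3,6} + f 2 {6} * (wedge (f 3) (wedge (f 4) (wedge (f 5) (f 6)))) {1,2,3,4}"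
  by (subst wedge_one[OF assms]) (simp add: sgn_sh_prod insert_Diff_if)

lemma lv_12356: fixes f :: "nat \<Rightarrow> form" assumes "is_one_form (f 2)"
  shows "(wedge (f 2) (wedge (f 3) (wedge (f 4) (wedge (f 5) (f 6))))) {1,2,3,5,6} = f 2 {1} * (wedge (f 3) (wedge (f 4) (wedge (f 5) (f 6)))) {2,3,5,6} - f 2 {2} * (wedge (f 3) (wedge (f 4) (wedge (f 5) (f 6)))) {1,3,5,6} + f 2 {3} * (wedge (f 3) (wedge (f 4) (wedge (f 5) (f 6)))) {1,2,5,6} - f 2 {5} * (wedge (f 3) (wedge (f 4) (wedge (f 5) (f 6)))) {1,2,3,6} + f 2 {6} * (wedge (f 3) (wedge (f 4) (wedge (f 5) (f 6)))) {1,2,3,5}"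
  by (subst wedge_one[OF assms]) (simp add: sgn_sh_prod insert_Diff_if)

lemma lv_12456: fixes f :: "nat \<Rightarrow> form" assumes "is_one_form (f 2)"
  shows "(wedge (f 2) (wedge (f 3) (wedge (f 4) (wedge (f 5) (f 6))))) {1,2,4,5,6} = f 2 {1} * (wedge (f 3) (wedge (f 4) (wedge (f 5) (f 6)))) {2,4,5,6} - f 2 {2} * (wedge (f 3) (wedge (f 4) (wedge (f 5) (f 6)))) {1,4,5,6} + f 2 {4} * (wedge (f 3) (wedge (f 4) (wedge (f 5) (f 6)))) {1,2,5,6} - f 2 {5} * (wedge (f 3) (wedge (f 4) (wedge (f 5) (f 6)))) {1,2,4,6} + f 2 {6} * (wedge (f 3) (wedge (f 4) (wedge (f 5) (f 6)))) {1,2,4,5}"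
  by (subst wedge_one[OF assms]) (simp add: sgn_sh_prod insert_Diff_if)

lemma lv_13456: fixes f :: "nat \<Rightarrow> form" assumes "is_one_form (f 2)"
  shows "(wedge (f 2) (wedge (f 3) (wedge (f 4) (wedge (f 5) (f 6))))) {1,3,4,5,6} = f 2 {1} * (wedge (f 3) (wedge (f 4) (wedge (f 5) (f 6)))) {3,4,5,6} - f 2 {3} * (wedge (f 3) (wedge (f 4) (wedge (f 5) (f 6)))) {1,4,5,6} + f 2 {4} * (wedge (f 3) (wedge (f 4) (wedge (f 5) (f 6)))) {1,3,5,6} - f 2 {5} * (wedge (f 3) (wedge (f 4) (wedge (f 5) (f 6)))) {1,3,4,6} + f 2 {6} * (wedge (f 3) (wedge (f 4) (wedge (f 5) (f 6)))) {1,3,4,5}"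
  by (subst wedge_one[OF assms]) (simp add: sgn_sh_prod insert_Diff_if)

lemma lv_23456: fixes f :: "nat \<Rightarrow> form" assumes "is_one_form (f 2)"
  shows "(wedge (f 2) (wedge (f 3) (wedge (f 4) (wedge (f 5) (f 6))))) {2,3,4,5,6} = f 2 {2} * (wedge (f 3) (wedge (f 4) (wedge (f 5) (f 6)))) {3,4,5,6} - f 2 {3} * (wedge (f 3) (wedge (f 4) (wedge (f 5) (f 6)))) {2,4,5,6} + f 2 {4} * (wedge (f 3) (wedge (f 4) (wedge (f 5) (f 6)))) {2,3,5,6} - f 2 {5} * (wedge (f 3) (wedge (f 4) (wedge (f 5) (f 6)))) {2,3,4,6} + f 2 {6} * (wedge (f 3) (wedge (f 4) (wedge (f 5) (f 6)))) {2,3,4,5}"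
  by (subst wedge_one[OF assms]) (simp add: sgn_sh_prod insert_Diff_if)

lemma lv_123456: fixes f :: "nat \<Rightarrow> form" assumes "is_one_form (f 1)"
  shows "(wedge (f 1) (wedge (f 2) (wedge (f 3) (wedge (f 4) (wedge (f 5) (f 6)))))) {1,2,3,4,5,6} = f 1 {1} * (wedge (f 2) (wedge (f 3) (wedge (f 4) (wedge (f 5) (f 6))))) {2,3,4,5,6} - f 1 {2} * (wedge (f 2) (wedge (f 3) (wedge (f 4) (wedge (f 5) (f 6))))) {1,3,4,5,6} + f 1 {3} * (wedge (f 2) (wedge (f 3) (wedge (f 4) (wedge (f 5) (f 6))))) {1,2,4,5,6} - f 1 {4} * (wedge (f 2) (wedge (f 3) (wedge (f 4) (wedge (f 5) (f 6))))) {1,2,3,5,6} + f 1 {5} * (wedge (f 2) (wedge (f 3) (wedge (f 4) (wedge (f 5) (f 6))))) {1,2,3,4,6} - f 1 {6} * (wedge (f 2) (wedge (f 3) (wedge (f 4) (wedge (f 5) (f 6))))) {1,2,3,4,5}"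
  by (subst wedge_one[OF assms]) (simp add: sgn_sh_prod insert_Diff_if)

lemmas pvs = pv_12 pv_13 pv_14 pv_15 pv_16 pv_23 pv_24 pv_25 pv_26 pv_34 pv_35 pv_36 pv_45 pv_46 pv_56
lemmas lvs = lv_123 lv_124 lv_125 lv_126 lv_134 lv_135 lv_136 lv_145 lv_146 lv_156 lv_234 lv_235 lv_236 lv_245 lv_246 lv_256 lv_345 lv_346 lv_356 lv_456 lv_1234 lv_1235 lv_1236 lv_1245 lv_1246 lv_1256 lv_1345 lv_1346 lv_1356 lv_1456 lv_2345 lv_2346 lv_2356 lv_2456 lv_3456 lv_12345 lv_12346 lv_12356 lv_12456 lv_13456 lv_23456 lv_123456


lemma six_fold_pf:
  fixes f :: "nat \<Rightarrow> form" and Om :: "nat \<Rightarrow> nat \<Rightarrow> real"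
  assumes o1: "is_one_form (f 1)" and o2: "is_one_form (f 2)" and o3: "is_one_form (f 3)"
    and o4: "is_one_form (f 4)" and o5: "is_one_form (f 5)" and o6: "is_one_form (f 6)"
    and Om: "\<And>p q. Om p q = wedge (f 1) (f 2) {p,q} + wedge (f 3) (f 4) {p,q} + wedge (f 5) (f 6) {p,q}"
  shows "(wedge (f 1) (wedge (f 2) (wedge (f 3) (wedge (f 4) (wedge (f 5) (f 6)))))) {1,2,3,4,5,6} = Om 1 2 * Om 3 4 * Om 5 6 - Om 1 2 * Om 3 5 * Om 4 6 + Om 1 2 * Om 3 6 * Om 4 5 - Om 1 3 * Om 2 4 * Om 5 6 + Om 1 3 * Om 2 5 * Om 4 6 - Om 1 3 * Om 2 6 * Om 4 5 + Om 1 4 * Om 2 3 * Om 5 6 - Om 1 4 * Om 2 5 * Om 3 6 + Om 1 4 * Om 2 6 * Om 3 5 - Om 1 5 * Om 2 3 * Om 4 6 + Om 1 5 * Om 2 4 * Om 3 6 - Om 1 5 * Om 2 6 * Om 3 4 + Om 1 6 * Om 2 3 * Om 4 5 - Om 1 6 * Om 2 4 * Om 3 5 + Om 1 6 * Om 2 5 * Om 3 4"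
  apply (simp only: Om lvs pvs o1 o2 o3 o4 o5 o6)
  apply algebra
  done



definition sdeg :: "form \<Rightarrow> nat \<Rightarrow> bool" where
  "sdeg \<alpha> n \<longleftrightarrow> (\<forall>I. \<alpha> I \<noteq> 0 \<longrightarrow> card I = n)"

lemma sdeg_wedge:
  assumes a: "sdeg \<alpha> p" and b: "sdeg \<beta> q"
  shows "sdeg (wedge \<alpha> \<beta>) (p + q)"
  unfolding sdeg_def
proof (intro allI impI)
  fix K assume ne: "wedge \<alpha> \<beta> K \<noteq> 0"
  then have K: "K \<subseteq> {1..6}" by (auto simp: wedge_def split: if_splits)
  then have fin: "finite K" by (rule finite_subset) simp
  from ne K have "(\<Sum>I\<in>Pow K. sgn_sh I (K - I) * \<alpha> I * \<beta> (K - I)) \<noteq> 0" by (simp add: wedge_def)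
  then obtain I where I: "I \<in> Pow K" "sgn_sh I (K - I) * \<alpha> I * \<beta> (K - I) \<noteq> 0"
    using sum.not_neutral_contains_not_neutral by blast
  then have "\<alpha> I \<noteq> 0" "\<beta> (K - I) \<noteq> 0" by auto
  then have c: "card I = p" "card (K - I) = q" using a b by (auto simp: sdeg_def)
  have "I \<subseteq> K" using I by auto
  then have "card (K - I) = card K - card I" "card I \<le> card K"
    using fin by (auto simp: card_Diff_subset finite_subset card_mono)
  then show "card K = p + q" using c by linarith
qed

lemma sdeg_one: "is_one_form f \<Longrightarrow> sdeg f 1"
  unfolding sdeg_def is_one_form_def by fastforce

lemma su3_nonzero:
  assumes su: "su3_structure \<omega> \<gamma>"
  shows "\<omega> \<noteq> zero_form"
proof
  assume z: "\<omega> = zero_form"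
  from su obtain f :: "nat \<Rightarrow> form" where
    fo: "\<forall>i\<in>{1..6}. is_one_form (f i)"
    and nz: "wedge (f 1) (wedge (f 2) (wedge (f 3) (wedge (f 4) (wedge (f 5) (f 6))))) \<noteq> zero_form"
    and om: "\<omega> = (\<lambda>I. wedge (f 1) (f 2) I + wedge (f 3) (f 4) I + wedge (f 5) (f 6) I)"
    unfolding su3_structure_def by blast
  have o1: "is_one_form (f 1)" and o2: "is_one_form (f 2)" and o3: "is_one_form (f 3)"
    and o4: "is_one_form (f 4)" and o5: "is_one_form (f 5)" and o6: "is_one_form (f 6)"
    using fo by auto
  define Om where "Om p q = wedge (f 1) (f 2) {p,q} + wedge (f 3) (f 4) {p,q} + wedge (f 5) (f 6) {p,q}" for p q
  have zz: "\<And>I. wedge (f 1) (f 2) I + wedge (f 3) (f 4) I + wedge (f 5) (f 6) I = 0"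
    using z om by (metis zero_form_def)
  have Om0: "\<And>p q. Om p q = 0" unfolding Om_def using zz by blast
  have v6: "wedge (f 1) (wedge (f 2) (wedge (f 3) (wedge (f 4) (wedge (f 5) (f 6))))) {1,2,3,4,5,6} = 0"
    using six_fold_pf[OF o1 o2 o3 o4 o5 o6 Om_def] Om0 by simp
  have sd: "sdeg (wedge (f 1) (wedge (f 2) (wedge (f 3) (wedge (f 4) (wedge (f 5) (f 6)))))) (1+(1+(1+(1+(1+1)))))"
    by (intro sdeg_wedge sdeg_one o1 o2 o3 o4 o5 o6)
  have "wedge (f 1) (wedge (f 2) (wedge (f 3) (wedge (f 4) (wedge (f 5) (f 6))))) = zero_form"
  proof
    fix K
    show "wedge (f 1) (wedge (f 2) (wedge (f 3) (wedge (f 4) (wedge (f 5) (f 6))))) K = zero_form K"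
    proof (rule ccontr)
      assume ne: "wedge (f 1) (wedge (f 2) (wedge (f 3) (wedge (f 4) (wedge (f 5) (f 6))))) K \<noteq> zero_form K"
      then have ne': "wedge (f 1) (wedge (f 2) (wedge (f 3) (wedge (f 4) (wedge (f 5) (f 6))))) K \<noteq> 0"
        by (simp add: zero_form_def)
      then have cK: "card K = 6" using sd unfolding sdeg_def by simp
      from ne' have K: "K \<subseteq> {1..6}" by (auto simp: wedge_def split: if_splits)
      have "K = {1..6}" using K cK by (intro card_subset_eq) auto
      then have "K = {1,2,3,4,5,6}" by (simp only: six)
      then show False using ne' v6 by simp
    qed
  qed
  then show False using nz by simp
qed

lemma Phi_scale:
  assumes "\<And>i j. i \<in> {1,2,3} \<Longrightarrow> j \<in> {1,2,3} \<Longrightarrow> k i j = \<mu> * k' i j"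
  shows "Phi k = (\<lambda>r s. \<mu> * Phi k' r s)"
  using assms by (auto simp: Phi_def fun_eq_iff algebra_simps)

lemma t9: "dext (AB_form Kw) {2,4,6} = 0" by (simp add: evs)
lemma t10: "w3 (eb 1) (eb 3) (eb 5) {2,4,6} = 0" by (simp add: evs)
lemma t11: "w3 (eb 2) (eb 4) (eb 6) {2,4,6} = 1" by (simp add: evs)

theorem mainTheorem4:
  fixes Kw Kb :: "nat \<Rightarrow> nat \<Rightarrow> real" and a b \<mu> :: real
  assumes hf: "half_flat (AB_form Kw)
      (\<lambda>I. a * w3 (eb 1) (eb 3) (eb 5) I + b * w3 (eb 2) (eb 4) (eb 6) I + dext (AB_form Kb) I)"
    and coupled: "dext (AB_form Kw) =
      (\<lambda>I. \<mu> * (a * w3 (eb 1) (eb 3) (eb 5) I + b * w3 (eb 2) (eb 4) (eb 6) I + dext (AB_form Kb) I))"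
  shows "\<mu> \<noteq> 0 \<and> a = 0 \<and> b = 0 \<and> Phi Kw = (\<lambda>r s. \<mu> * Phi Kb r s)"
proof -
  have c: "\<And>S. dext (AB_form Kw) S = \<mu> * (a * w3 (eb 1) (eb 3) (eb 5) S + b * w3 (eb 2) (eb 4) (eb 6) S + dext (AB_form Kb) S)"
    using coupled by metis
  have ha: "\<mu> * a = 0" using c[of "{1,3,5}"] by (simp add: evs)
  have hb: "\<mu> * b = 0" using c[of "{2,4,6}"] by (simp add: evs)
  have e11: "Kw 1 1 = \<mu> * Kb 1 1" using c[of "{3,5,2}"] by (simp add: evs)
  have e12: "Kw 1 2 = \<mu> * Kb 1 2" using c[of "{3,5,4}"] by (simp add: evs)
  have e13: "Kw 1 3 = \<mu> * Kb 1 3" using c[of "{3,5,6}"] by (simp add: evs)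
  have e21: "Kw 2 1 = \<mu> * Kb 2 1" using c[of "{1,5,2}"] by (simp add: evs)
  have e22: "Kw 2 2 = \<mu> * Kb 2 2" using c[of "{1,5,4}"] by (simp add: evs)
  have e23: "Kw 2 3 = \<mu> * Kb 2 3" using c[of "{1,5,6}"] by (simp add: evs)
  have e31: "Kw 3 1 = \<mu> * Kb 3 1" using c[of "{1,3,2}"] by (simp add: evs)
  have e32: "Kw 3 2 = \<mu> * Kb 3 2" using c[of "{1,3,4}"] by (simp add: evs)
  have e33: "Kw 3 3 = \<mu> * Kb 3 3" using c[of "{1,3,6}"] by (simp add: evs)
  have eall: "\<And>i j. i \<in> {1,2,3} \<Longrightarrow> j \<in> {1,2,3} \<Longrightarrow> Kw i j = \<mu> * Kb i j"
    using e11 e12 e13 e21 e22 e23 e31 e32 e33 by auto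
  have mu: "\<mu> \<noteq> 0"
  proof
    assume m0: "\<mu> = 0"
    have "AB_form Kw = zero_form"
      unfolding AB_form_def zero_form_def three using eall m0 by (simp add: fun_eq_iff)
    moreover have "AB_form Kw \<noteq> zero_form"
      using hf unfolding half_flat_def using su3_nonzero by blast
    ultimately show False by simp
  qed
  show ?thesis using mu ha hb Phi_scale[OF eall] by simp
qed

end
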